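(* Assume (R). Then for all integers $r,s\ge0$, $$(-1)^rA_{r,s}(x)=(-1)^sA_{s,r}(-x).$$
   Context: Let $(\alpha_n)_{n\ge0}$ be an arbitrary sequence of complex numbers; its Appell polynomials are $A_n(x)=\sum_{\nu=0}^{n}\binom{n}{\nu}\alpha_{n-\nu}x^\nu$. For $r,s\ge0$ define $A_{r,s}(x)=\sum_{\nu=0}^{r}\binom{r}{\nu}A_{s+\nu}(x)$ (umbrally $(A(x)+1)^rA(x)^s$). Property (R) means $A_n(1-x)=(-1)^nA_n(x)$ for all $n\ge0$. *)

theory Defs
  imports Complex_Main
begin

definition appell :: "(nat \<Rightarrow> complex) \<Rightarrow> nat \<Rightarrow> complex \<Rightarrow> complex" where
  "appell \<alpha> n x = (\<Sum>\<nu>=0..n. of_nat (n choose \<nu>) * \<alpha> (n - \<nu>) * x ^ \<nu>)"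

definition appell2 :: "(nat \<Rightarrow> complex) \<Rightarrow> nat \<Rightarrow> nat \<Rightarrow> complex \<Rightarrow> complex" where
  "appell2 \<alpha> r s x = (\<Sum>\<nu>=0..r. of_nat (r choose \<nu>) * appell \<alpha> (s + \<nu>) x)"

definition propR :: "(nat \<Rightarrow> complex) \<Rightarrow> bool" where
  "propR \<alpha> \<longleftrightarrow> (\<forall>n x. appell \<alpha> n (1 - x) = (-1) ^ n * appell \<alpha> n x)"

end

theory Submission
  imports Defs "HOL-Computational_Algebra.Formal_Power_Series"
begin

definition afps :: "(nat \<Rightarrow> complex) \<Rightarrow> complex fps" where
  "afps \<alpha> = Abs_fps (\<lambda>k. \<alpha> k / fact k)"

lemma appell_fps: "appell \<alpha> n x = fact n * fps_nth (fps_exp x * afps \<alpha>) n"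
proof -
  have "fact n * fps_nth (fps_exp x * afps \<alpha>) n
      = (\<Sum>i=0..n. fact n * (x ^ i / fact i * (\<alpha> (n - i) / fact (n - i))))"
    by (simp add: fps_mult_nth afps_def sum_distrib_left)
  also have "\<dots> = (\<Sum>i=0..n. of_nat (n choose i) * \<alpha> (n - i) * x ^ i)"
  proof (rule sum.cong)
    fix i assume "i \<in> {0..n}"
    then have "i \<le> n" by simp
    then have "(of_nat (n choose i) :: complex) = fact n / (fact i * fact (n - i))"
      by (simp add: binomial_fact)
    then show "fact n * (x ^ i / fact i * (\<alpha> (n - i) / fact (n - i)))
        = of_nat (n choose i) * \<alpha> (n - i) * x ^ i" by simp
  qed simp
  finally show ?thesis by (simp add: appell_def)
qed

lemma appell_shift: "appell \<alpha> n (x + 1) = (\<Sum>i=0..n. of_nat (n choose i) * appell \<alpha> i x)"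
proof -
  have "fps_exp (x+1) * afps \<alpha> = (fps_exp x * afps \<alpha>) * fps_exp 1"
    by (simp add: fps_exp_add_mult mult_ac)
  then have "appell \<alpha> n (x + 1) = fact n * fps_nth ((fps_exp x * afps \<alpha>) * fps_exp 1) n"
    by (metis appell_fps)
  also have "\<dots> = (\<Sum>i=0..n. fact n * (fps_nth (fps_exp x * afps \<alpha>) i * (1 / fact (n - i))))"
    by (simp add: fps_mult_nth sum_distrib_left)
  also have "\<dots> = (\<Sum>i=0..n. of_nat (n choose i) * appell \<alpha> i x)"
  proof (rule sum.cong)
    fix i assume "i \<in> {0..n}"
    then have "i \<le> n" by simp
    then have "(of_nat (n choose i) :: complex) = fact n / (fact i * fact (n - i))"
      by (simp add: binomial_fact)
    then show "fact n * (fps_nth (fps_exp x * afps \<alpha>) i * (1 / fact (n - i)))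
        = of_nat (n choose i) * appell \<alpha> i x" by (simp add: appell_fps)
  qed simp
  finally show ?thesis .
qed

lemma appell2_Suc: "appell2 \<alpha> (Suc r) s x = appell2 \<alpha> r s x + appell2 \<alpha> r (Suc s) x"
proof -
  have "appell2 \<alpha> (Suc r) s x = appell \<alpha> s x
     + (\<Sum>i=0..r. of_nat (r choose i) * appell \<alpha> (Suc s + i) x)
     + (\<Sum>i=0..r. of_nat (r choose Suc i) * appell \<alpha> (s + Suc i) x)"
    unfolding appell2_def
    by (subst sum.atLeast0_atMost_Suc_shift) (simp add: distrib_right sum.distrib)
  moreover have "appell2 \<alpha> r s x = appell \<alpha> s x
     + (\<Sum>i=0..r. of_nat (r choose Suc i) * appell \<alpha> (s + Suc i) x)"
  proof -
    have "appell2 \<alpha> r s x = (\<Sum>\<nu>=0..Suc r. of_nat (r choose \<nu>) * appell \<alpha> (s + \<nu>) x)"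
      unfolding appell2_def by simp
    also have "\<dots> = appell \<alpha> s x
     + (\<Sum>i=0..r. of_nat (r choose Suc i) * appell \<alpha> (s + Suc i) x)"
      by (subst sum.atLeast0_atMost_Suc_shift) simp
    finally show ?thesis .
  qed
  moreover have "appell2 \<alpha> r (Suc s) x = (\<Sum>i=0..r. of_nat (r choose i) * appell \<alpha> (Suc s + i) x)"
    unfolding appell2_def by simp
  ultimately show ?thesis by simp
qed

theorem mainTheorem7:
  fixes \<alpha> :: "nat \<Rightarrow> complex" and r s :: nat and x :: complex
  assumes "propR \<alpha>"
  shows "(-1) ^ r * appell2 \<alpha> r s x = (-1) ^ s * appell2 \<alpha> s r (- x)"
proof (induction r arbitrary: s)
  case 0
  have R: "appell \<alpha> s (1 - x) = (-1) ^ s * appell \<alpha> s x"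
    using assms unfolding propR_def by blast
  have "appell2 \<alpha> s 0 (- x) = appell \<alpha> s (- x + 1)"
    unfolding appell2_def appell_shift by simp
  also have "\<dots> = (-1) ^ s * appell \<alpha> s x" using R by simp
  finally have "(-1) ^ s * appell2 \<alpha> s 0 (- x) = ((-1) ^ s * (-1) ^ s) * appell \<alpha> s x"
    by simp
  also have "\<dots> = appell \<alpha> s x" by (simp flip: power_add)
  finally show ?case by (simp add: appell2_def)
next
  case (Suc r)
  have "(-1) ^ Suc r * appell2 \<alpha> (Suc r) s x
     = - ((-1) ^ r * appell2 \<alpha> r s x) - (-1) ^ r * appell2 \<alpha> r (Suc s) x"
    by (simp add: appell2_Suc algebra_simps)
  also have "\<dots> = - ((-1) ^ s * appell2 \<alpha> s r (- x)) - (-1) ^ Suc s * appell2 \<alpha> (Suc s) r (- x)"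
    using Suc.IH[of s] Suc.IH[of "Suc s"] by simp
  also have "\<dots> = (-1) ^ s * appell2 \<alpha> s (Suc r) (- x)"
    by (simp add: appell2_Suc algebra_simps)
  finally show ?case .
qed

end
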